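(* Let $\varphi\in\mathrm{THT}(\mathsf X,\mathsf U)$ and let $M=(T,T)$ be an equilibrium model of $\varphi$. Then $M$ is almost-empty, i.e. $T(i)\neq\emptyset$ for only finitely many $i$.
   Context: Fix a finite set $P$ of atomic propositions. THT formulas over $P$: $\varphi ::= p \mid \bot \mid \varphi\vee\varphi \mid \varphi\wedge\varphi \mid \varphi\rightarrow\varphi \mid \mathsf{X}\varphi \mid \varphi\,\mathsf{U}\,\varphi \mid \varphi\,\mathsf{R}\,\varphi$, with $\neg\varphi:=\varphi\rightarrow\bot$ and $\top:=\neg\bot$. A THT interpretation is a pair $M=(H,T)$ of infinite words over $2^P$ with $H(i)\subseteq T(i)$ for all $i$; it is total if $H=T$. Satisfaction $M,i\models\varphi$ is defined by: - $M,i\not\models\bot$; - $M,i\models p$ iff $p\in H(i)$; - $\vee$ and $\wedge$ are interpreted as usual; - $M,i\models\varphi\rightarrow\psi$ iff for both $H'\in\{H,T\}$, either $(H',T),i\not\models\varphi$ or $(H',T),i\models\psi$; - $M,i\models\mathsf X\varphi$ iff $M,i+1\models\varphi$; - $M,i\models\varphi\mathsf U\psi$ iff some $j\ge i$ has $M,j\models\psi$ and $M,k\models\varphi$ for all $i\le k<j$. $M\models\varphi$ means $M,0\models\varphi$. An equilibrium model of $\varphi$ is a total $(T,T)\models\varphi$ with $(H,T)\not\models\varphi$ whenever $H(i)\subseteq T(i)$ for all $i$ and $H\ne T$. $\mathrm{THT}(\mathsf X,\mathsf U)$ is the set of THT formulas whose only temporal modalities are $\mathsf X$ and $\mathsf U$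 (no bounds on nesting). A total interpretation is almost-empty if it has only finitely many positions $i$ with $T(i)\ne\emptyset$. *)

theory Defs
  imports Main
begin

datatype 'a tht =
    Atom 'a
  | Bot
  | Disj "'a tht" "'a tht"
  | Conj "'a tht" "'a tht"
  | Impl "'a tht" "'a tht"
  | Next "'a tht"
  | Until "'a tht" "'a tht"
  | Release "'a tht" "'a tht"

type_synonym 'a word = "nat \<Rightarrow> 'a set"

fun sat :: "'a word \<Rightarrow> 'a word \<Rightarrow> nat \<Rightarrow> 'a tht \<Rightarrow> bool" where
  "sat H T i (Atom p) = (p \<in> H i)"
| "sat H T i Bot = False"
| "sat H T i (Disj f g) = (sat H T i f \<or> sat H T i g)"
| "sat H T i (Conj f g) = (sat H T i f \<and> sat H T i g)"
| "sat H T i (Impl f g) = ((\<not> sat H T i f \<or> sat H T i g) \<and> (\<not> sat T T i f \<or> sat T T i g))"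
| "sat H T i (Next f) = sat H T (Suc i) f"
| "sat H T i (Until f g) = (\<exists>j\<ge>i. sat H T j g \<and> (\<forall>k. i \<le> k \<and> k < j \<longrightarrow> sat H T k f))"
| "sat H T i (Release f g) = (\<forall>j\<ge>i. sat H T j g \<or> (\<exists>k. i \<le> k \<and> k < j \<and> sat H T k f))"

fun in_XU :: "'a tht \<Rightarrow> bool" where
  "in_XU (Atom p) = True"
| "in_XU Bot = True"
| "in_XU (Disj f g) = (in_XU f \<and> in_XU g)"
| "in_XU (Conj f g) = (in_XU f \<and> in_XU g)"
| "in_XU (Impl f g) = (in_XU f \<and> in_XU g)"
| "in_XU (Next f) = in_XU f"
| "in_XU (Until f g) = (in_XU f \<and> in_XU g)"
| "in_XU (Release f g) = False"

definition equilibrium_model :: "'a word \<Rightarrow> 'a tht \<Rightarrow> bool" where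
  "equilibrium_model T \<phi> \<longleftrightarrow> sat T T 0 \<phi> \<and>
     (\<forall>H. (\<forall>i. H i \<subseteq> T i) \<and> H \<noteq> T \<longrightarrow> \<not> sat H T 0 \<phi>)"

definition almost_empty :: "'a word \<Rightarrow> bool" where
  "almost_empty T \<longleftrightarrow> finite {i. T i \<noteq> {}}"

end

theory Submission
  imports Defs
begin

lemma persist:
  assumes "\<forall>k. H k \<subseteq> T k"
  shows "sat H T i f \<Longrightarrow> sat T T i f"
  using assms by (induction f arbitrary: i) (simp_all, blast+)

lemma finite_dep:
  assumes "in_XU f" "sat T T i f"
  shows "\<exists>N. \<forall>H. (\<forall>k. H k \<subseteq> T k) \<longrightarrow> (\<forall>k<N. H k = T k) \<longrightarrow> sat H T i f"
  using assms
proof (induction f arbitrary: i)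
  case (Atom p)
  show ?case by (rule exI[of _ "Suc i"]) (use Atom in auto)
next
  case Bot thus ?case by simp
next
  case (Disj f g)
  show ?case
  proof (cases "sat T T i f")
    case True
    have "\<exists>N. \<forall>H. (\<forall>k. H k \<subseteq> T k) \<longrightarrow> (\<forall>k<N. H k = T k) \<longrightarrow> sat H T i f" using Disj.IH(1) Disj.prems True by simp
    then obtain N where "\<forall>H. (\<forall>k. H k \<subseteq> T k) \<longrightarrow> (\<forall>k<N. H k = T k) \<longrightarrow> sat H T i f" by blast
    thus ?thesis by (intro exI[of _ N]) simp
  next
    case False
    have "\<exists>N. \<forall>H. (\<forall>k. H k \<subseteq> T k) \<longrightarrow> (\<forall>k<N. H k = T k) \<longrightarrow> sat H T i g" using Disj.IH(2) Disj.prems False by simp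
    then obtain N where "\<forall>H. (\<forall>k. H k \<subseteq> T k) \<longrightarrow> (\<forall>k<N. H k = T k) \<longrightarrow> sat H T i g" by blast
    thus ?thesis by (intro exI[of _ N]) simp
  qed
next
  case (Conj f g)
  have "\<exists>N. \<forall>H. (\<forall>k. H k \<subseteq> T k) \<longrightarrow> (\<forall>k<N. H k = T k) \<longrightarrow> sat H T i f" using Conj.IH(1) Conj.prems by simp
  then obtain N1 where "\<forall>H. (\<forall>k. H k \<subseteq> T k) \<longrightarrow> (\<forall>k<N1. H k = T k) \<longrightarrow> sat H T i f" by blast
  moreover have "\<exists>N. \<forall>H. (\<forall>k. H k \<subseteq> T k) \<longrightarrow> (\<forall>k<N. H k = T k) \<longrightarrow> sat H T i g" using Conj.IH(2) Conj.prems by simp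
  then obtain N2 where "\<forall>H. (\<forall>k. H k \<subseteq> T k) \<longrightarrow> (\<forall>k<N2. H k = T k) \<longrightarrow> sat H T i g" by blast
  ultimately show ?case by (intro exI[of _ "max N1 N2"]) auto
next
  case (Impl f g)
  show ?case
  proof (cases "sat T T i f")
    case True
    with Impl have "sat T T i g" by simp
    hence "\<exists>N. \<forall>H. (\<forall>k. H k \<subseteq> T k) \<longrightarrow> (\<forall>k<N. H k = T k) \<longrightarrow> sat H T i g" using Impl.IH(2) Impl.prems by simp
    then obtain N where
      N: "\<forall>H. (\<forall>k. H k \<subseteq> T k) \<longrightarrow> (\<forall>k<N. H k = T k) \<longrightarrow> sat H T i g" by blast
    show ?thesis using N Impl.prems by (intro exI[of _ N]) auto
  next
    case False
    have "\<forall>H. (\<forall>k. H k \<subseteq> T k) \<longrightarrow> \<not> sat H T i f"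
      using False persist by blast
    thus ?thesis using Impl.prems False by (intro exI[of _ 0]) simp
  qed
next
  case (Next f)
  thus ?case by simp
next
  case (Until f g)
  then obtain j where j: "j \<ge> i" "sat T T j g" "\<forall>k. i \<le> k \<and> k < j \<longrightarrow> sat T T k f" by auto
  have "\<exists>N. \<forall>H. (\<forall>k. H k \<subseteq> T k) \<longrightarrow> (\<forall>k<N. H k = T k) \<longrightarrow> sat H T j g" using Until.IH(2) Until.prems j by simp
  then obtain Ng where
    Ng: "\<forall>H. (\<forall>k. H k \<subseteq> T k) \<longrightarrow> (\<forall>k<Ng. H k = T k) \<longrightarrow> sat H T j g" by blast
  have "\<forall>k\<in>{i..<j}. \<exists>N. \<forall>H. (\<forall>k. H k \<subseteq> T k) \<longrightarrow> (\<forall>k<N. H k = T k) \<longrightarrow> sat H T k f"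
    using Until.IH(1) Until.prems j by simp
  from bchoice[OF this] obtain Nf where
    Nf: "\<forall>k\<in>{i..<j}. \<forall>H. (\<forall>k. H k \<subseteq> T k) \<longrightarrow> (\<forall>k'<Nf k. H k' = T k') \<longrightarrow> sat H T k f"
    by blast
  define N where "N = max Ng (Max (Nf ` {i..<j}))"
  have "\<forall>H. (\<forall>k. H k \<subseteq> T k) \<longrightarrow> (\<forall>k<N. H k = T k) \<longrightarrow> sat H T i (Until f g)"
  proof (intro allI impI)
    fix H assume H: "\<forall>k. H k \<subseteq> T k" "\<forall>k<N. H k = T k"
    have "sat H T j g" using Ng H by (auto simp: N_def)
    moreover have "\<forall>k. i \<le> k \<and> k < j \<longrightarrow> sat H T k f"
    proof (intro allI impI)
      fix k assume k: "i \<le> k \<and> k < j"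
      have "Nf k \<le> Max (Nf ` {i..<j})" using k by (intro Max_ge) auto
      hence "\<forall>k'<Nf k. H k' = T k'" using H by (auto simp: N_def)
      thus "sat H T k f" using Nf H k by auto
    qed
    ultimately show "sat H T i (Until f g)" using j by auto
  qed
  thus ?case by blast
next
  case (Release f g) thus ?case by simp
qed

theorem mainTheorem13:
  fixes \<phi> :: "'a::finite tht" and T :: "'a word"
  assumes "in_XU \<phi>" and "equilibrium_model T \<phi>"
  shows "almost_empty T"
proof (rule ccontr)
  assume ne: "\<not> almost_empty T"
  have s0: "sat T T 0 \<phi>" using assms(2) unfolding equilibrium_model_def by simp
  have "\<exists>N. \<forall>H. (\<forall>k. H k \<subseteq> T k) \<longrightarrow> (\<forall>k<N. H k = T k) \<longrightarrow> sat H T 0 \<phi>"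
    by (rule finite_dep[OF assms(1) s0])
  then obtain N where
    N: "\<forall>H. (\<forall>k. H k \<subseteq> T k) \<longrightarrow> (\<forall>k<N. H k = T k) \<longrightarrow> sat H T 0 \<phi>"
    by blast
  from ne have inf: "infinite {i. T i \<noteq> {}}" unfolding almost_empty_def by simp
  have "\<exists>m\<ge>N. m \<in> {i. T i \<noteq> {}}"
  proof (rule ccontr)
    assume "\<not> (\<exists>m\<ge>N. m \<in> {i. T i \<noteq> {}})"
    hence "{i. T i \<noteq> {}} \<subseteq> {..<N}" by force
    hence "finite {i. T i \<noteq> {}}" using finite_subset by blast
    thus False using inf by simp
  qed
  then obtain m where m: "m \<ge> N" "T m \<noteq> {}" by blast
  define H where "H = (\<lambda>k. if k < N then T k else {})"
  have H1: "\<forall>k. H k \<subseteq> T k" by (simp add: H_def)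
  have H2: "\<forall>k<N. H k = T k" by (simp add: H_def)
  have "sat H T 0 \<phi>" using N H1 H2 by blast
  moreover have "H m \<noteq> T m" using m by (simp add: H_def)
  hence "H \<noteq> T" by metis
  ultimately show False using assms(2) H1
    unfolding equilibrium_model_def by blast
qed

end
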